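(* Every prime reciprocal Puiseux monoid satisfies the ascending chain condition on principal ideals (ACCP).
   Context: A Puiseux monoid is an additive submonoid of $(\mathbb{Q}_{\ge 0},+)$. For $q\in\mathbb{Q}_{>0}$, $\mathsf{d}(q)$ denotes the denominator of $q$ in lowest terms. A Puiseux monoid $M$ is prime reciprocal if there exist an infinite set $P$ of prime numbers and a set $S\subseteq\mathbb{Q}_{>0}$ whose elements have pairwise distinct denominators such that $M$ is generated by $S$ as a monoid and $\{\mathsf{d}(s)\mid s\in S\}=P$. A principal ideal of a (commutative, cancellative) monoid $M$ is a set $x+M$ with $x\in M$; $M$ satisfies ACCP if every ascending chain $x_1+M\subseteq x_2+M\subseteq\cdots$ of principal ideals eventually stabilizes. *)

theory Defs
  imports Complex_Main "HOL-Computational_Algebra.Primes"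
begin

definition den :: "rat \<Rightarrow> int" where
  "den q = snd (quotient_of q)"

inductive_set monoid_gen :: "rat set \<Rightarrow> rat set" for S :: "rat set" where
  zero: "0 \<in> monoid_gen S"
| add: "s \<in> S \<Longrightarrow> x \<in> monoid_gen S \<Longrightarrow> s + x \<in> monoid_gen S"

definition puiseux_monoid :: "rat set \<Rightarrow> bool" where
  "puiseux_monoid M \<longleftrightarrow> 0 \<in> M \<and> (\<forall>x\<in>M. \<forall>y\<in>M. x + y \<in> M) \<and> (\<forall>x\<in>M. 0 \<le> x)"

definition prime_reciprocal :: "rat set \<Rightarrow> bool" where
  "prime_reciprocal M \<longleftrightarrow> puiseux_monoid M \<and>
     (\<exists>(P :: int set) (S :: rat set).
        infinite P \<and> (\<forall>p\<in>P. prime p) \<and>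
        (\<forall>s\<in>S. 0 < s) \<and> inj_on den S \<and> den ` S = P \<and>
        M = monoid_gen S)"

definition principal_ideal :: "rat set \<Rightarrow> rat \<Rightarrow> rat set" where
  "principal_ideal M x = {x + y | y. y \<in> M}"

definition ACCP :: "rat set \<Rightarrow> bool" where
  "ACCP M \<longleftrightarrow> (\<forall>x :: nat \<Rightarrow> rat. (\<forall>n. x n \<in> M) \<longrightarrow>
      (\<forall>n. principal_ideal M (x n) \<subseteq> principal_ideal M (x (Suc n))) \<longrightarrow>
      (\<exists>N. \<forall>n\<ge>N. principal_ideal M (x n) = principal_ideal M (x N)))"

end

theory Submission
  imports Defs
begin

definition numr :: "rat \<Rightarrow> int" where "numr q = fst (quotient_of q)"

lemma den_pos: "den q > 0"
  unfolding den_def by (rule quotient_of_denom_pos')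

lemma den_mul: "of_int (den q) * q = of_int (numr q)"
proof -
  have qq: "quotient_of q = (numr q, den q)" by (simp add: numr_def den_def)
  have "q = of_int (numr q) / of_int (den q)" using quotient_of_div[OF qq] .
  then show ?thesis using den_pos[of q] by (simp add: field_simps)
qed

lemma den_coprime: "coprime (numr q) (den q)"
  using quotient_of_coprime[of q "numr q" "den q"] by (simp add: numr_def den_def)

lemma numr_pos: "0 < q \<Longrightarrow> 0 < numr q"
proof -
  assume "0 < q"
  then have "(0::rat) < of_int (den q) * q" using den_pos[of q] by simp
  then show ?thesis using den_mul[of q] by simp
qed

lemma int_div_dvd:
  assumes "(of_int a / of_int b :: rat) \<in> \<int>" "b \<noteq> 0"
  shows "b dvd a"
proof -
  obtain k where "(of_int a / of_int b :: rat) = of_int k" using assms(1) Ints_cases by metis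
  then have "(of_int a :: rat) = of_int (k * b)" using assms(2) by (simp add: field_simps)
  then have "a = k * b" by (simp only: of_int_eq_iff)
  then show ?thesis by simp
qed

lemma keyL:
  assumes P: "\<forall>s\<in>S. prime (den s)" and I: "inj_on den S"
    and T: "finite T" "T \<subseteq> S"
    and int: "(\<Sum>t\<in>T. of_int (c t) * t) \<in> \<int>" and s: "s \<in> T"
  shows "den s dvd c s"
proof -
  define Q where "Q = (\<Prod>t\<in>T-{s}. den t)"
  have Qt: "of_int Q * t \<in> \<int>" if "t \<in> T-{s}" for t
  proof -
    define R where "R = (\<Prod>u\<in>T-{s}-{t}. den u)"
    have "Q = den t * R" unfolding Q_def R_def using prod.remove[OF _ that] T(1) by blast
    then have "of_int Q * t = of_int R * (of_int (den t) * t)" by (simp add: algebra_simps)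
    also have "\<dots> = of_int (R * numr t)" using den_mul[of t] by simp
    finally show ?thesis by simp
  qed
  have "of_int Q * (\<Sum>t\<in>T. of_int (c t) * t) = of_int Q * (of_int (c s) * s + (\<Sum>t\<in>T-{s}. of_int (c t) * t))"
    using sum.remove[OF T(1) s, of "\<lambda>t. of_int (c t) * t"] by simp
  also have "\<dots> = of_int (Q * c s) * s + (\<Sum>t\<in>T-{s}. of_int (c t) * (of_int Q * t))"
    by (simp add: sum_distrib_left algebra_simps)
  finally have eq: "of_int (Q * c s) * s = of_int Q * (\<Sum>t\<in>T. of_int (c t) * t) - (\<Sum>t\<in>T-{s}. of_int (c t) * (of_int Q * t))"
    by simp
  have "of_int (Q * c s) * s \<in> \<int>"
  proof -
    have A: "of_int Q * (\<Sum>t\<in>T. of_int (c t) * t) \<in> \<int>" using int by (intro Ints_mult) auto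
    have B: "(\<Sum>t\<in>T-{s}. of_int (c t) * (of_int Q * t)) \<in> \<int>"
      by (rule Ints_sum, rule Ints_mult) (use Qt in auto)
    show ?thesis unfolding eq using A B by (rule Ints_diff)
  qed
  moreover have "of_int (Q * c s) * s = (of_int (Q * c s * numr s) / of_int (den s) :: rat)"
    using den_mul[of s] den_pos[of s] by (simp add: field_simps)
  ultimately have d: "den s dvd Q * c s * numr s" using int_div_dvd[of "Q * c s * numr s" "den s"] den_pos[of s] by simp
  have ps: "prime (den s)" using P s T(2) by auto
  have n1: "\<not> den s dvd numr s"
  proof
    assume "den s dvd numr s"
    then have "is_unit (den s)" by (rule coprime_common_divisor[OF den_coprime[of s]]) simp
    then show False using ps not_prime_unit by metis
  qed
  have n2: "\<not> den s dvd Q"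
  proof
    assume "den s dvd Q"
    then obtain t where t: "t \<in> T-{s}" "den s dvd den t"
      unfolding Q_def using prime_dvd_prod_iff[OF _ ps] T(1) by blast
    have "prime (den t)" using P t T(2) by auto
    then have "den s = den t" using primes_dvd_imp_eq[OF ps] t by simp
    then have "s = t" using I t s T(2) by (auto dest: inj_onD)
    then show False using t by simp
  qed
  show ?thesis using d n1 n2 ps by (simp add: prime_dvd_mult_iff)
qed


definition supp :: "(rat \<Rightarrow> nat) \<Rightarrow> rat set" where "supp k = {s. k s \<noteq> 0}"
definition fval :: "nat \<Rightarrow> (rat \<Rightarrow> nat) \<Rightarrow> rat" where
  "fval n k = of_nat n + (\<Sum>s\<in>supp k. of_nat (k s) * s)"
definition cnt :: "(rat \<Rightarrow> nat) \<Rightarrow> nat" where "cnt k = (\<Sum>s\<in>supp k. k s)"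
definition isform :: "rat set \<Rightarrow> (rat \<Rightarrow> nat) \<Rightarrow> bool" where
  "isform S k \<longleftrightarrow> finite (supp k) \<and> supp k \<subseteq> S \<and> (\<forall>s. k s < nat (den s))"

lemma fval_sup: "finite A \<Longrightarrow> supp k \<subseteq> A \<Longrightarrow> fval n k = of_nat n + (\<Sum>s\<in>A. of_nat (k s) * s)"
  unfolding fval_def by (simp, rule sum.mono_neutral_left) (auto simp: supp_def)

lemma cnt_sup: "finite A \<Longrightarrow> supp k \<subseteq> A \<Longrightarrow> cnt k = (\<Sum>s\<in>A. k s)"
  unfolding cnt_def by (rule sum.mono_neutral_left) (auto simp: supp_def)

lemma form_unique:
  assumes P: "\<forall>s\<in>S. prime (den s)" and I: "inj_on den S"
    and f: "isform S k" "isform S k'" and e: "fval n k = fval n' k'"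
  shows "n = n' \<and> k = k'"
proof -
  define T where "T = supp k \<union> supp k'"
  have T: "finite T" "T \<subseteq> S" using f unfolding T_def isform_def by auto
  have e2: "of_nat n + (\<Sum>t\<in>T. of_nat (k t) * t) = of_nat n' + (\<Sum>t\<in>T. of_nat (k' t) * t)"
    using e fval_sup[OF T(1), of k n] fval_sup[OF T(1), of k' n'] unfolding T_def by auto
  have "(\<Sum>t\<in>T. of_int (int (k t) - int (k' t)) * t) = (\<Sum>t\<in>T. of_nat (k t) * t) - (\<Sum>t\<in>T. of_nat (k' t) * t)"
    by (simp add: sum_subtractf left_diff_distrib)
  also have "\<dots> = of_int (int n' - int n)" using e2 by (simp add: algebra_simps)
  finally have int: "(\<Sum>t\<in>T. of_int (int (k t) - int (k' t)) * t) \<in> \<int>" by simp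
  have kk: "k t = k' t" for t
  proof (cases "t \<in> T")
    case True
    have d: "den t dvd (int (k t) - int (k' t))" by (rule keyL[OF P I T int True])
    have b1: "k t < nat (den t)" "k' t < nat (den t)" using f unfolding isform_def by auto
    show ?thesis
    proof (rule ccontr)
      assume "k t \<noteq> k' t"
      then have "int (k t) - int (k' t) \<noteq> 0" by simp
      from dvd_imp_le_int[OF this d] have "\<bar>den t\<bar> \<le> \<bar>int (k t) - int (k' t)\<bar>" .
      then show False using b1 den_pos[of t] by linarith
    qed
  next
    case False
    then show ?thesis unfolding T_def supp_def by auto
  qed
  then have "k = k'" by auto
  with e2 show ?thesis by simp
qed

lemma form_step:
  assumes pos: "\<forall>s\<in>S. 0 < s" and f: "isform S k" and s: "s \<in> S"
  shows "(isform S (k(s := Suc (k s))) \<and> s + fval n k = fval n (k(s := Suc (k s)))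
            \<and> cnt (k(s := Suc (k s))) = Suc (cnt k))
       \<or> (isform S (k(s := 0)) \<and> s + fval n k = fval (n + nat (numr s)) (k(s := 0)) \<and> 0 < nat (numr s))"
proof -
  define A where "A = insert s (supp k)"
  have A: "finite A" "A \<subseteq> S" "s \<in> A" using f s unfolding A_def isform_def by auto
  have skA: "supp k \<subseteq> A" unfolding A_def by auto
  have fk: "fval m k = of_nat m + of_nat (k s) * s + (\<Sum>t\<in>A-{s}. of_nat (k t) * t)" for m
    using fval_sup[OF A(1) skA, of m] sum.remove[OF A(1) A(3), of "\<lambda>t. of_nat (k t) * t"]
    by (simp add: add.assoc)
  have ck: "cnt k = k s + (\<Sum>t\<in>A-{s}. k t)"
    using cnt_sup[OF A(1) skA] sum.remove[OF A(1) A(3), of k] by simp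
  have same: "(\<Sum>t\<in>A-{s}. of_nat (k' t) * t) = (\<Sum>t\<in>A-{s}. of_nat (k t) * (t::rat))"
     "(\<Sum>t\<in>A-{s}. k' t) = (\<Sum>t\<in>A-{s}. k t)" if "\<forall>t. t \<noteq> s \<longrightarrow> k' t = k t" for k'
    using that by (auto intro!: sum.cong)
  have b: "k s < nat (den s)" using f unfolding isform_def by auto
  show ?thesis
  proof (cases "Suc (k s) < nat (den s)")
    case True
    define k' where "k' = k(s := Suc (k s))"
    have sk': "supp k' \<subseteq> A" unfolding k'_def A_def supp_def by auto
    have f': "isform S k'" using f True A sk' finite_subset[OF sk' A(1)] unfolding isform_def k'_def
      by auto
    have "fval n k' = of_nat n + of_nat (k' s) * s + (\<Sum>t\<in>A-{s}. of_nat (k' t) * t)"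
      using fval_sup[OF A(1) sk', of n] sum.remove[OF A(1) A(3), of "\<lambda>t. of_nat (k' t) * t"] by (simp add: add.assoc)
    also have "\<dots> = s + fval n k" unfolding fk same(1)[of k', OF allI] by (simp add: k'_def algebra_simps)
    finally have 1: "s + fval n k = fval n k'" by simp
    have "cnt k' = k' s + (\<Sum>t\<in>A-{s}. k' t)"
      using cnt_sup[OF A(1) sk'] sum.remove[OF A(1) A(3), of k'] by simp
    also have "\<dots> = Suc (cnt k)" unfolding ck same(2)[of k', OF allI] by (simp add: k'_def)
    finally show ?thesis using f' 1 unfolding k'_def by auto
  next
    case False
    then have eqd: "Suc (k s) = nat (den s)" using b by simp
    define k' where "k' = k(s := 0)"
    have sk': "supp k' \<subseteq> A" unfolding k'_def A_def supp_def by auto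
    have f': "isform S k'" using f A sk' finite_subset[OF sk' A(1)] unfolding isform_def k'_def
      using den_pos[of s] by auto
    have np: "0 < numr s" using numr_pos pos s by auto
    have "of_nat (k s) * s + s = of_int (den s) * s"
    proof -
      have "of_nat (k s) * s + s = of_nat (Suc (k s)) * s" by (simp add: algebra_simps)
      also have "\<dots> = of_int (den s) * s" using eqd den_pos[of s]
        by (metis of_int_of_nat_eq of_nat_0_le_iff int_nat_eq less_imp_le)
      finally show ?thesis .
    qed
    also have "\<dots> = of_nat (nat (numr s))" using den_mul[of s] np by simp
    finally have key: "of_nat (k s) * s + s = of_nat (nat (numr s))" .
    have "fval (n + nat (numr s)) k' = of_nat (n + nat (numr s)) + of_nat (k' s) * s + (\<Sum>t\<in>A-{s}. of_nat (k' t) * t)"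
      using fval_sup[OF A(1) sk', of "n + nat (numr s)"] sum.remove[OF A(1) A(3), of "\<lambda>t. of_nat (k' t) * t"] by (simp add: add.assoc)
    also have "\<dots> = s + fval n k" unfolding fk same(1)[of k', OF allI] using key
      by (simp add: k'_def algebra_simps)
    finally show ?thesis using f' np unfolding k'_def by auto
  qed
qed


lemma monoid_gen_add: "x \<in> monoid_gen S \<Longrightarrow> y \<in> monoid_gen S \<Longrightarrow> x + y \<in> monoid_gen S"
  by (induction x rule: monoid_gen.induct) (auto simp: add.assoc intro: monoid_gen.intros)

lemma form_exists:
  assumes pos: "\<forall>s\<in>S. 0 < s" and y: "y \<in> monoid_gen S"
  shows "\<exists>n k. isform S k \<and> y = fval n k"
  using y
proof (induction y rule: monoid_gen.induct)
  case zero
  have "isform S (\<lambda>_. 0) \<and> 0 = fval 0 (\<lambda>_. 0)"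
    using den_pos by (simp add: isform_def supp_def fval_def)
  then show ?case by blast
next
  case (add s x)
  then obtain n k where nk: "isform S k" "x = fval n k" by blast
  from form_step[OF pos nk(1) add.hyps(1), of n] show ?case using nk(2) by blast
qed

definition canon :: "rat set \<Rightarrow> rat \<Rightarrow> nat \<times> (rat \<Rightarrow> nat)" where
  "canon S y = (THE p. isform S (snd p) \<and> y = fval (fst p) (snd p))"

lemma canon_eq:
  assumes P: "\<forall>s\<in>S. prime (den s)" and I: "inj_on den S" and f: "isform S k"
  shows "canon S (fval n k) = (n, k)"
  unfolding canon_def
proof (rule the_equality)
  show "isform S (snd (n, k)) \<and> fval n k = fval (fst (n, k)) (snd (n, k))" using f by simp
next
  fix p assume "isform S (snd p) \<and> fval n k = fval (fst p) (snd p)"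
  then have "n = fst p \<and> k = snd p" using form_unique[OF P I f] by blast
  then show "p = (n, k)" by (cases p) simp
qed

definition NN :: "rat set \<Rightarrow> rat \<Rightarrow> nat" where "NN S y = fst (canon S y)"
definition CC :: "rat set \<Rightarrow> rat \<Rightarrow> nat" where "CC S y = cnt (snd (canon S y))"
definition ltc :: "rat set \<Rightarrow> rat \<Rightarrow> rat \<Rightarrow> bool" where
  "ltc S a b \<longleftrightarrow> NN S a < NN S b \<or> (NN S a = NN S b \<and> CC S a < CC S b)"

lemma step_lt:
  assumes P: "\<forall>s\<in>S. prime (den s)" and I: "inj_on den S" and pos: "\<forall>s\<in>S. 0 < s"
    and y: "y \<in> monoid_gen S" and s: "s \<in> S"
  shows "ltc S y (s + y)"
proof -
  obtain n k where nk: "isform S k" "y = fval n k" using form_exists[OF pos y] by blast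
  have c: "canon S y = (n, k)" using canon_eq[OF P I nk(1)] nk(2) by simp
  from form_step[OF pos nk(1) s, of n] show ?thesis
  proof
    assume h: "isform S (k(s := Suc (k s))) \<and> s + fval n k = fval n (k(s := Suc (k s)))
            \<and> cnt (k(s := Suc (k s))) = Suc (cnt k)"
    then have "canon S (s + y) = (n, k(s := Suc (k s)))" using canon_eq[OF P I] nk(2) by metis
    then show ?thesis using c h unfolding ltc_def NN_def CC_def by simp
  next
    assume h: "isform S (k(s := 0)) \<and> s + fval n k = fval (n + nat (numr s)) (k(s := 0)) \<and> 0 < nat (numr s)"
    then have "canon S (s + y) = (n + nat (numr s), k(s := 0))" using canon_eq[OF P I] nk(2) by metis
    then show ?thesis using c h unfolding ltc_def NN_def CC_def by simp
  qed
qed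

lemma chain_lt:
  assumes P: "\<forall>s\<in>S. prime (den s)" and I: "inj_on den S" and pos: "\<forall>s\<in>S. 0 < s"
    and m: "m \<in> monoid_gen S" and y: "y \<in> monoid_gen S"
  shows "m = 0 \<or> ltc S y (m + y)"
  using m
proof (induction m rule: monoid_gen.induct)
  case zero
  then show ?case by simp
next
  case (add s x)
  have xy: "x + y \<in> monoid_gen S" by (rule monoid_gen_add[OF add.hyps(2) y])
  have l: "ltc S (x + y) (s + (x + y))" by (rule step_lt[OF P I pos xy add.hyps(1)])
  from add.IH show ?case
  proof
    assume "x = 0" then show ?thesis using l by simp
  next
    assume "ltc S y (x + y)"
    then show ?thesis using l unfolding ltc_def by (auto simp: add.assoc)
  qed
qed

lemma ev_const:
  fixes f :: "nat \<Rightarrow> nat"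
  assumes dec: "\<forall>n\<ge>N0. f (Suc n) \<le> f n"
  shows "\<exists>N\<ge>N0. \<forall>n\<ge>N. f n = f N"
proof -
  have mono: "f m \<le> f n" if "N0 \<le> n" "n \<le> m" for n m
    using that(2)
  proof (induction m rule: dec_induct)
    case base then show ?case by simp
  next
    case (step m) then show ?case using dec that(1) by (meson le_trans)
  qed
  obtain N where N: "N0 \<le> N" "\<forall>y. N0 \<le> y \<longrightarrow> f N \<le> f y"
    using ex_has_least_nat[of "\<lambda>n. N0 \<le> n" N0 f] by auto
  have "\<forall>n\<ge>N. f n = f N" using N mono by (meson antisym le_trans)
  then show ?thesis using N(1) by blast
qed

theorem mainTheorem5:
  fixes M :: "rat set"
  assumes "prime_reciprocal M"
  shows "ACCP M"
proof -
  obtain P S where PS: "infinite P" "\<forall>p\<in>P. prime p" "\<forall>s\<in>S. 0 < s" "inj_on den S"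
      "den ` S = P" "M = monoid_gen S"
    using assms unfolding prime_reciprocal_def by blast
  have Pr: "\<forall>s\<in>S. prime (den s)" using PS(2,5) by auto
  note I = PS(4) and pos = PS(3)
  show ?thesis unfolding ACCP_def
  proof (intro allI impI)
    fix x :: "nat \<Rightarrow> rat"
    assume xm: "\<forall>n. x n \<in> M" and inc: "\<forall>n. principal_ideal M (x n) \<subseteq> principal_ideal M (x (Suc n))"
    have step: "x n = x (Suc n) \<or> ltc S (x (Suc n)) (x n)" for n
    proof -
      have "x n \<in> principal_ideal M (x n)"
        unfolding principal_ideal_def using PS(6) monoid_gen.zero[of S] by force
      then have "x n \<in> principal_ideal M (x (Suc n))" using inc by blast
      then obtain m where m: "m \<in> M" "x n = x (Suc n) + m" unfolding principal_ideal_def by blast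
      have "m = 0 \<or> ltc S (x (Suc n)) (m + x (Suc n))"
        by (rule chain_lt[OF Pr I pos]) (use m xm PS(6) in auto)
      then show ?thesis using m(2) by (auto simp: add.commute)
    qed
    have "\<forall>n\<ge>0. NN S (x (Suc n)) \<le> NN S (x n)"
      using step unfolding ltc_def by (metis le_refl less_imp_le)
    from ev_const[OF this] obtain N1 where N1: "\<forall>n\<ge>N1. NN S (x n) = NN S (x N1)" by blast
    have "\<forall>n\<ge>N1. CC S (x (Suc n)) \<le> CC S (x n)"
    proof (intro allI impI)
      fix n assume n: "N1 \<le> n"
      have "NN S (x (Suc n)) = NN S (x n)" using N1 n by (metis le_Suc_eq)
      then show "CC S (x (Suc n)) \<le> CC S (x n)" using step[of n] unfolding ltc_def by auto
    qed
    from ev_const[OF this] obtain N2 where N2: "N1 \<le> N2" "\<forall>n\<ge>N2. CC S (x n) = CC S (x N2)" by blast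
    have eq: "x (Suc n) = x n" if "N2 \<le> n" for n
    proof -
      have "NN S (x (Suc n)) = NN S (x n)" using N1 N2(1) that by (metis le_Suc_eq le_trans)
      moreover have "CC S (x (Suc n)) = CC S (x n)" using N2 that by (metis le_Suc_eq)
      ultimately show ?thesis using step[of n] unfolding ltc_def by auto
    qed
    have "x n = x N2" if "N2 \<le> n" for n
      using that
    proof (induction n rule: dec_induct)
      case base then show ?case by simp
    next
      case (step m) then show ?case using eq by simp
    qed
    then show "\<exists>N. \<forall>n\<ge>N. principal_ideal M (x n) = principal_ideal M (x N)" by metis
  qed
qed

end
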